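(* Let $G=(\mathcal{V},\mathcal{E})$ be a hypergraph, $P$ a pmf on $\mathcal{V}$, $L\ge1$, and suppose $G_P$ is complete multipartite with partition $\{\mathcal{I}_j\}_{j=1}^k$ of $\mathrm{supp}(P)$ into independent sets. Define the pmf $P^*$ on $[k]$ by $P^*(j)=\sum_{v\in\mathcal{I}_j}P(v)$. Then $I_{L+1}(G,P)=H_{L+1}(P^* )$ and for every $\ell\in[L+1]$, $$\theta^{(\ell)}_{L+1}(G,P)=2H_{L+1}(P^* )-\frac{2L+1-\ell}{L}H_{2L+2-\ell}(P^* ).$$
   Context: Notation: $[j]=\{1,\dots,j\}$, $[i:j]=\{i,\dots,j\}$; $\log$ base 2. A hypergraph $G=(\mathcal{V},\mathcal{E})$ has finite $\mathcal{V}$ and $\mathcal{E}\subseteq2^{\mathcal{V}}$ with edges of cardinality $\ge2$. An independent set is a vertex subset none of whose subsets is an edge; a hypergraph is complete multipartite with partition $\{\mathcal{I}_j\}$ of its vertex set into independent sets if every vertex subset is either an edge or contained in some $\mathcal{I}_j$. $G_P=(\mathcal{V}_P,\mathcal{E}_P)$ with $\mathcal{V}_P=\mathrm{supp}(P)$ and $\mathcal{E}_P$ the edges of $G$ contained in $\mathcal{V}_P$. For $v_{[k]}\in\mathcal{V}^k$, $\sigma(v_{[k]})=\{v_1,\dots,v_k\}$, $P(v_S)=\prod_{j\in S}P(v_j)$. $I_{L+1}(G,P):=-\frac1L\log\sum_{v_{[L+1]}:\sigma(v_{[L+1]})\notin\mathcal{E}}P(v_{[L+1]})$, $\theta^{(L+1)}_{L+1}(G,P):=I_{L+1}(G,P)$,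 and for $\ell\in[L]$, $\theta^{(\ell)}_{L+1}(G,P):=2I_{L+1}(G,P)+\frac1L\log\sum_{v_{[\ell]}}P(v_{[\ell]})\Big[\sum_{v_{[\ell+1:L+1]}:\sigma(v_{[L+1]})\notin\mathcal{E}}P(v_{[\ell+1:L+1]})\Big]^2$. The Rényi entropy of order $\alpha\ge2$ is $H_\alpha(Q)=-\frac{1}{\alpha-1}\log\sum_uQ(u)^\alpha$. *)

theory Defs
  imports "HOL-Library.FuncSet" Complex_Main
begin

definition hypergraph :: "'a set \<Rightarrow> 'a set set \<Rightarrow> bool" where
  "hypergraph V E \<longleftrightarrow> finite V \<and> E \<subseteq> Pow V \<and> (\<forall>e\<in>E. 2 \<le> card e)"

definition is_pmf_on :: "'a set \<Rightarrow> ('a \<Rightarrow> real) \<Rightarrow> bool" where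
  "is_pmf_on V P \<longleftrightarrow> (\<forall>v. 0 \<le> P v) \<and> (\<forall>v. v \<notin> V \<longrightarrow> P v = 0) \<and> (\<Sum>v\<in>V. P v) = 1"

definition supp :: "'a set \<Rightarrow> ('a \<Rightarrow> real) \<Rightarrow> 'a set" where
  "supp V P = {v \<in> V. P v \<noteq> 0}"

definition edges_P :: "'a set \<Rightarrow> 'a set set \<Rightarrow> ('a \<Rightarrow> real) \<Rightarrow> 'a set set" where
  "edges_P V E P = {e \<in> E. e \<subseteq> supp V P}"

definition independent_set :: "'a set \<Rightarrow> 'a set set \<Rightarrow> 'a set \<Rightarrow> bool" where
  "independent_set V E S \<longleftrightarrow> S \<subseteq> V \<and> (\<forall>T. T \<subseteq> S \<longrightarrow> T \<notin> E)"

definition complete_multipartite ::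
    "'a set \<Rightarrow> 'a set set \<Rightarrow> nat \<Rightarrow> (nat \<Rightarrow> 'a set) \<Rightarrow> bool" where
  "complete_multipartite V E k I \<longleftrightarrow>
     (\<forall>j\<in>{1..k}. I j \<noteq> {} \<and> independent_set V E (I j)) \<and>
     (\<forall>i\<in>{1..k}. \<forall>j\<in>{1..k}. i \<noteq> j \<longrightarrow> I i \<inter> I j = {}) \<and>
     (\<Union>j\<in>{1..k}. I j) = V \<and>
     (\<forall>S. S \<subseteq> V \<longrightarrow> S \<in> E \<or> (\<exists>j\<in>{1..k}. S \<subseteq> I j))"

text \<open>Tuples v_[m] in V^m are functions on {1..m} (extensional).\<close>
definition I_L1 :: "'a set \<Rightarrow> 'a set set \<Rightarrow> ('a \<Rightarrow> real) \<Rightarrow> nat \<Rightarrow> real" where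
  "I_L1 V E P L = - (1 / real L) * log 2
     (\<Sum>v\<in>{1..L+1} \<rightarrow>\<^sub>E V. if v ` {1..L+1} \<notin> E then (\<Prod>j\<in>{1..L+1}. P (v j)) else 0)"

definition theta :: "'a set \<Rightarrow> 'a set set \<Rightarrow> ('a \<Rightarrow> real) \<Rightarrow> nat \<Rightarrow> nat \<Rightarrow> real" where
  "theta V E P L l =
     (if l = L + 1 then I_L1 V E P L
      else 2 * I_L1 V E P L + (1 / real L) * log 2
        (\<Sum>u\<in>{1..l} \<rightarrow>\<^sub>E V. (\<Prod>j\<in>{1..l}. P (u j)) *
           (\<Sum>w\<in>{l+1..L+1} \<rightarrow>\<^sub>E V.
              if u ` {1..l} \<union> w ` {l+1..L+1} \<notin> E then (\<Prod>j\<in>{l+1..L+1}. P (w j)) else 0)\<^sup>2))"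

definition renyi :: "real \<Rightarrow> ('b \<Rightarrow> real) \<Rightarrow> 'b set \<Rightarrow> real" where
  "renyi alpha Q A = - (1 / (alpha - 1)) * log 2 (\<Sum>u\<in>A. Q u powr alpha)"

end

theory Submission imports Defs begin

lemma tuple_sum_restrict:
  fixes P :: "'a \<Rightarrow> real"
  assumes "finite V" "finite B" "J \<subseteq> V"
  shows "(\<Sum>w\<in>B \<rightarrow>\<^sub>E V. if w ` B \<subseteq> J then (\<Prod>b\<in>B. P (w b)) else 0)
         = (\<Sum>x\<in>J. P x) ^ card B"
proof -
  have fJ: "finite J" using assms finite_subset by blast
  have sub: "B \<rightarrow>\<^sub>E J \<subseteq> B \<rightarrow>\<^sub>E V" using assms(3) by (auto simp: PiE_def Pi_def)
  have "(\<Sum>w\<in>B \<rightarrow>\<^sub>E V. if w ` B \<subseteq> J then (\<Prod>b\<in>B. P (w b)) else 0)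
      = (\<Sum>w\<in>B \<rightarrow>\<^sub>E J. if w ` B \<subseteq> J then (\<Prod>b\<in>B. P (w b)) else 0)"
  proof (rule sum.mono_neutral_cong_right)
    show "finite (B \<rightarrow>\<^sub>E V)" using assms by (simp add: finite_PiE)
    show "\<forall>w\<in>(B \<rightarrow>\<^sub>E V) - (B \<rightarrow>\<^sub>E J). (if w ` B \<subseteq> J then (\<Prod>b\<in>B. P (w b)) else 0) = 0"
      by (auto simp: PiE_def Pi_def)
  qed (use sub in auto)
  also have "\<dots> = (\<Sum>w\<in>B \<rightarrow>\<^sub>E J. \<Prod>b\<in>B. P (w b))"
    by (rule sum.cong) (auto simp: PiE_def Pi_def)
  also have "\<dots> = (\<Prod>b\<in>B. \<Sum>y\<in>J. P y)"
    using prod_sum_PiE[of B "\<lambda>_. J" "\<lambda>_ y. P y"] assms fJ by simp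
  also have "\<dots> = (\<Sum>x\<in>J. P x) ^ card B" by simp
  finally show ?thesis .
qed

lemma sq_single:
  assumes "finite K" "\<And>i j. i \<in> K \<Longrightarrow> j \<in> K \<Longrightarrow> Q i \<Longrightarrow> Q j \<Longrightarrow> i = j"
  shows "(\<Sum>j\<in>K. if Q j then (c j::real) else 0)\<^sup>2 = (\<Sum>j\<in>K. if Q j then (c j)\<^sup>2 else 0)"
proof (cases "\<exists>j\<in>K. Q j")
  case True
  then obtain j where j: "j \<in> K" "Q j" by blast
  have "(\<Sum>j\<in>K. if Q j then (c j::real) else 0) = c j"
    by (subst sum.remove[OF assms(1) j(1)]) (use j assms(2) in \<open>auto intro!: sum.neutral split: if_splits\<close>)
  moreover have "(\<Sum>j\<in>K. if Q j then (c j)\<^sup>2 else 0) = (c j)\<^sup>2"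
    by (subst sum.remove[OF assms(1) j(1)]) (use j assms(2) in \<open>auto intro!: sum.neutral split: if_splits\<close>)
  ultimately show ?thesis by simp
next
  case False then show ?thesis by simp
qed

lemma powr_nat_nonneg: "(x::real) \<ge> 0 \<Longrightarrow> 0 < n \<Longrightarrow> x powr real n = x ^ n"
  using powr_realpow' by simp


lemma key:
  fixes P :: "'a \<Rightarrow> real"
  assumes H: "hypergraph V E" and pm: "is_pmf_on V P"
    and cm: "complete_multipartite (supp V P) (edges_P V E P) k I"
    and S0: "S0 \<subseteq> supp V P" and fB: "finite B" and nB: "B \<noteq> {}"
  shows "(\<Sum>w\<in>B \<rightarrow>\<^sub>E V. if S0 \<union> w ` B \<notin> E then (\<Prod>b\<in>B. P (w b)) else 0)
    = (\<Sum>j\<in>{1..k}. if S0 \<subseteq> I j then (\<Sum>x\<in>I j. P x) ^ card B else 0)"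
proof -
  have fV: "finite V" using H by (simp add: hypergraph_def)
  have cmu: "(\<forall>j\<in>{1..k}. I j \<noteq> {} \<and> independent_set (supp V P) (edges_P V E P) (I j)) \<and>
     (\<forall>i\<in>{1..k}. \<forall>j\<in>{1..k}. i \<noteq> j \<longrightarrow> I i \<inter> I j = {}) \<and>
     (\<Union>j\<in>{1..k}. I j) = supp V P \<and>
     (\<forall>S. S \<subseteq> supp V P \<longrightarrow> S \<in> edges_P V E P \<or> (\<exists>j\<in>{1..k}. S \<subseteq> I j))"
    using cm unfolding complete_multipartite_def .
  note c1 = cmu[THEN conjunct1] and c2 = cmu[THEN conjunct2, THEN conjunct1]
    and c3 = cmu[THEN conjunct2, THEN conjunct2, THEN conjunct1]
    and c4 = cmu[THEN conjunct2, THEN conjunct2, THEN conjunct2]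
  have Isupp: "\<And>j. j \<in> {1..k} \<Longrightarrow> I j \<subseteq> supp V P"
    using c3 by blast
  have suppV: "supp V P \<subseteq> V" by (auto simp: supp_def)
  have disj: "\<And>i j. i \<in> {1..k} \<Longrightarrow> j \<in> {1..k} \<Longrightarrow> i \<noteq> j \<Longrightarrow> I i \<inter> I j = {}"
    using c2 by blast
  have indep: "\<And>j T. j \<in> {1..k} \<Longrightarrow> T \<subseteq> I j \<Longrightarrow> T \<notin> edges_P V E P"
  proof -
    fix j T assume "j \<in> {1..k}" "T \<subseteq> I j"
    then have "independent_set (supp V P) (edges_P V E P) (I j)" using c1 by blast
    then show "T \<notin> edges_P V E P" using \<open>T \<subseteq> I j\<close> unfolding independent_set_def by blast
  qed
  have cover: "\<And>S. S \<subseteq> supp V P \<Longrightarrow> S \<in> edges_P V E P \<or> (\<exists>j\<in>{1..k}. S \<subseteq> I j)"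
    using c4 by blast
  have pw: "(if S0 \<union> w ` B \<notin> E then (\<Prod>b\<in>B. P (w b)) else 0)
      = (\<Sum>j\<in>{1..k}. if S0 \<union> w ` B \<subseteq> I j then (\<Prod>b\<in>B. P (w b)) else 0)"
    if w: "w \<in> B \<rightarrow>\<^sub>E V" for w
  proof (cases "(\<Prod>b\<in>B. P (w b)) = 0")
    case True then show ?thesis unfolding True by simp
  next
    case False
    define S where "S = S0 \<union> w ` B"
    have "\<forall>b\<in>B. P (w b) \<noteq> 0" using False fB by (simp add: prod_zero_iff)
    then have wB: "w ` B \<subseteq> supp V P" using w by (auto simp: supp_def PiE_def Pi_def)
    have Ss: "S \<subseteq> supp V P" using wB S0 by (auto simp: S_def)
    have Sne: "S \<noteq> {}" using nB by (auto simp: S_def)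
    have uniq: "i = j" if "i \<in> {1..k}" "j \<in> {1..k}" "S \<subseteq> I i" "S \<subseteq> I j" for i j
    proof (rule ccontr)
      assume "i \<noteq> j"
      have "S \<subseteq> I i \<inter> I j" using that by blast
      with disj[OF \<open>i \<in> {1..k}\<close> \<open>j \<in> {1..k}\<close> \<open>i \<noteq> j\<close>] Sne show False by simp
    qed
    show ?thesis
    proof (cases "S \<in> E")
      case True
      then have "S \<in> edges_P V E P" using Ss by (simp add: edges_P_def)
      then have "\<forall>j\<in>{1..k}. \<not> S \<subseteq> I j" using indep by blast
      then show ?thesis using True unfolding S_def by (intro trans[OF if_not_P] sum.neutral[symmetric]) auto
    next
      case nE: False
      then have "S \<notin> edges_P V E P" by (simp add: edges_P_def)
      then obtain j where j: "j \<in> {1..k}" "S \<subseteq> I j" using cover[OF Ss] by blast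
      have "(\<Sum>i\<in>{1..k}. if S \<subseteq> I i then (\<Prod>b\<in>B. P (w b)) else 0) = (\<Prod>b\<in>B. P (w b))"
      proof (subst sum.remove[OF _ j(1)])
        show "(if S \<subseteq> I j then \<Prod>b\<in>B. P (w b) else 0) +
          (\<Sum>i\<in>{1..k} - {j}. if S \<subseteq> I i then \<Prod>b\<in>B. P (w b) else 0) = (\<Prod>b\<in>B. P (w b))"
        proof -
          have "(\<Sum>i\<in>{1..k} - {j}. if S \<subseteq> I i then \<Prod>b\<in>B. P (w b) else 0) = 0"
          proof (rule sum.neutral, rule ballI)
            fix i assume i: "i \<in> {1..k} - {j}"
            then have "\<not> S \<subseteq> I i" using uniq[of i j] j by blast
            then show "(if S \<subseteq> I i then \<Prod>b\<in>B. P (w b) else 0) = 0" by simp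
          qed
          then show ?thesis using j by simp
        qed
      qed simp
      then show ?thesis using nE by (simp add: S_def)
    qed
  qed
  have "(\<Sum>w\<in>B \<rightarrow>\<^sub>E V. if S0 \<union> w ` B \<notin> E then (\<Prod>b\<in>B. P (w b)) else 0)
     = (\<Sum>w\<in>B \<rightarrow>\<^sub>E V. \<Sum>j\<in>{1..k}. if S0 \<union> w ` B \<subseteq> I j then (\<Prod>b\<in>B. P (w b)) else 0)"
    by (rule sum.cong[OF refl pw])
  also have "\<dots> = (\<Sum>j\<in>{1..k}. \<Sum>w\<in>B \<rightarrow>\<^sub>E V. if S0 \<union> w ` B \<subseteq> I j then (\<Prod>b\<in>B. P (w b)) else 0)"
    by (rule sum.swap)
  also have "\<dots> = (\<Sum>j\<in>{1..k}. if S0 \<subseteq> I j then (\<Sum>x\<in>I j. P x) ^ card B else 0)"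
  proof (rule sum.cong)
    fix j assume j: "j \<in> {1..k}"
    show "(\<Sum>w\<in>B \<rightarrow>\<^sub>E V. if S0 \<union> w ` B \<subseteq> I j then (\<Prod>b\<in>B. P (w b)) else 0)
       = (if S0 \<subseteq> I j then (\<Sum>x\<in>I j. P x) ^ card B else 0)"
    proof (cases "S0 \<subseteq> I j")
      case True
      then show ?thesis
        using tuple_sum_restrict[OF fV fB, of "I j" P] Isupp[OF j] suppV by simp
    next
      case False then show ?thesis by simp
    qed
  qed simp
  finally show ?thesis .
qed

theorem mainTheorem9:
  fixes V :: "'a set" and E :: "'a set set" and P :: "'a \<Rightarrow> real"
    and L k :: nat and I :: "nat \<Rightarrow> 'a set"
  assumes "hypergraph V E"
    and "is_pmf_on V P"
    and "1 \<le> L"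
    and "complete_multipartite (supp V P) (edges_P V E P) k I"
  shows "I_L1 V E P L = renyi (real L + 1) (\<lambda>j. \<Sum>v\<in>I j. P v) {1..k}
    \<and> (\<forall>l\<in>{1..L+1}. theta V E P L l =
         2 * renyi (real L + 1) (\<lambda>j. \<Sum>v\<in>I j. P v) {1..k}
         - (real (2 * L + 1) - real l) / real L
           * renyi (real (2 * L + 2) - real l) (\<lambda>j. \<Sum>v\<in>I j. P v) {1..k})"
proof -
  note H = assms(1) and pm = assms(2) and L1 = assms(3) and cm = assms(4)
  define Ps where "Ps = (\<lambda>j. \<Sum>v\<in>I j. P v)"
  have Ps0: "\<And>j. Ps j \<ge> 0" using pm unfolding Ps_def is_pmf_on_def by (simp add: sum_nonneg)
  have fV: "finite V" using H by (simp add: hypergraph_def)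
  have Isupp: "\<And>j. j \<in> {1..k} \<Longrightarrow> I j \<subseteq> supp V P"
    using cm unfolding complete_multipartite_def by blast
  have disj: "\<And>i j. i \<in> {1..k} \<Longrightarrow> j \<in> {1..k} \<Longrightarrow> i \<noteq> j \<Longrightarrow> I i \<inter> I j = {}"
    using cm unfolding complete_multipartite_def by blast
  have suppV: "supp V P \<subseteq> V" by (auto simp: supp_def)
  have Lpos: "real L > 0" using L1 by simp
  have pw: "\<And>a n. 0 < n \<Longrightarrow> (\<Sum>j\<in>{1..k}. Ps j ^ n) = (\<Sum>j\<in>{1..k}. Ps j powr real n)"
    using Ps0 powr_nat_nonneg by simp
  have S1: "(\<Sum>v\<in>{1..L+1} \<rightarrow>\<^sub>E V. if v ` {1..L+1} \<notin> E then (\<Prod>j\<in>{1..L+1}. P (v j)) else 0)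
      = (\<Sum>j\<in>{1..k}. Ps j ^ (L+1))"
    using key[OF H pm cm, of "{}" "{1..L+1}"] by (simp add: Ps_def)
  have HL: "renyi (real L + 1) Ps {1..k} = - (1 / real L) * log 2 (\<Sum>j\<in>{1..k}. Ps j ^ (L+1))"
  proof -
    have "(\<Sum>j\<in>{1..k}. Ps j ^ (L+1)) = (\<Sum>j\<in>{1..k}. Ps j powr (real L + 1))"
      using pw[of "L+1"] by (simp add: add.commute)
    then show ?thesis unfolding renyi_def by simp
  qed
  have part1: "I_L1 V E P L = renyi (real L + 1) Ps {1..k}"
    unfolding I_L1_def S1 HL ..
  have part2: "theta V E P L l =
         2 * renyi (real L + 1) Ps {1..k}
         - (real (2 * L + 1) - real l) / real L
           * renyi (real (2 * L + 2) - real l) Ps {1..k}" if l: "l \<in> {1..L+1}" for l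
  proof (cases "l = L + 1")
    case True
    then show ?thesis using part1 Lpos unfolding theta_def
      by (simp add: field_simps)
  next
    case False
    then have lL: "1 \<le> l" "l \<le> L" using l by auto
    define c where "c = (\<lambda>j. Ps j ^ (L + 1 - l))"
    let ?A = "{1..l}" and ?B = "{l+1..L+1}"
    have inner: "(\<Sum>w\<in>?B \<rightarrow>\<^sub>E V.
              if u ` ?A \<union> w ` ?B \<notin> E then (\<Prod>j\<in>?B. P (w j)) else 0)
         = (\<Sum>j\<in>{1..k}. if u ` ?A \<subseteq> I j then c j else 0)"
      if "u ` ?A \<subseteq> supp V P" for u
    proof -
      have cB: "card ?B = L + 1 - l" by simp
      show ?thesis using key[OF H pm cm that, of ?B] lL unfolding cB c_def Ps_def by simp
    qed
    have term_eq: "(\<Prod>j\<in>?A. P (u j)) *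
           (\<Sum>w\<in>?B \<rightarrow>\<^sub>E V.
              if u ` ?A \<union> w ` ?B \<notin> E then (\<Prod>j\<in>?B. P (w j)) else 0)\<^sup>2
        = (\<Sum>j\<in>{1..k}. if u ` ?A \<subseteq> I j then (\<Prod>j\<in>?A. P (u j)) * (c j)\<^sup>2 else 0)"
      if u: "u \<in> ?A \<rightarrow>\<^sub>E V" for u
    proof (cases "(\<Prod>j\<in>?A. P (u j)) = 0")
      case True then show ?thesis unfolding True by (auto intro!: sum.neutral)
    next
      case False
      have "\<forall>b\<in>?A. P (u b) \<noteq> 0" using False by (simp add: prod_zero_iff)
      then have uA: "u ` ?A \<subseteq> supp V P" using u by (auto simp: supp_def PiE_def Pi_def)
      have ne: "u ` ?A \<noteq> {}" using lL by auto
      have uniq: "i = j" if "i \<in> {1..k}" "j \<in> {1..k}" "u ` ?A \<subseteq> I i" "u ` ?A \<subseteq> I j" for i j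
      proof (rule ccontr)
        assume "i \<noteq> j"
        have "u ` ?A \<subseteq> I i \<inter> I j" using that by blast
        with disj[OF that(1,2) \<open>i \<noteq> j\<close>] ne show False by simp
      qed
      have "(\<Sum>j\<in>{1..k}. if u ` ?A \<subseteq> I j then c j else 0)\<^sup>2
          = (\<Sum>j\<in>{1..k}. if u ` ?A \<subseteq> I j then (c j)\<^sup>2 else 0)"
        by (rule sq_single[OF finite_atLeastAtMost uniq])
      note sq = this
      show ?thesis unfolding inner[OF uA] sq sum_distrib_left
        by (intro sum.cong refl) simp
    qed
    have X: "(\<Sum>u\<in>?A \<rightarrow>\<^sub>E V. (\<Prod>j\<in>?A. P (u j)) *
           (\<Sum>w\<in>?B \<rightarrow>\<^sub>E V.
              if u ` ?A \<union> w ` ?B \<notin> E then (\<Prod>j\<in>?B. P (w j)) else 0)\<^sup>2)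
        = (\<Sum>j\<in>{1..k}. Ps j ^ (2 * L + 2 - l))"
    proof -
      have "(\<Sum>u\<in>?A \<rightarrow>\<^sub>E V. (\<Prod>j\<in>?A. P (u j)) *
           (\<Sum>w\<in>?B \<rightarrow>\<^sub>E V.
              if u ` ?A \<union> w ` ?B \<notin> E then (\<Prod>j\<in>?B. P (w j)) else 0)\<^sup>2)
         = (\<Sum>u\<in>?A \<rightarrow>\<^sub>E V. \<Sum>j\<in>{1..k}. if u ` ?A \<subseteq> I j then (\<Prod>j\<in>?A. P (u j)) * (c j)\<^sup>2 else 0)"
        by (rule sum.cong[OF refl term_eq])
      also have "\<dots> = (\<Sum>j\<in>{1..k}. \<Sum>u\<in>?A \<rightarrow>\<^sub>E V. if u ` ?A \<subseteq> I j then (\<Prod>j\<in>?A. P (u j)) * (c j)\<^sup>2 else 0)"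
        by (rule sum.swap)
      also have "\<dots> = (\<Sum>j\<in>{1..k}. (c j)\<^sup>2 * (\<Sum>u\<in>?A \<rightarrow>\<^sub>E V. if u ` ?A \<subseteq> I j then (\<Prod>j\<in>?A. P (u j)) else 0))"
        unfolding sum_distrib_left by (intro sum.cong refl) (simp add: mult.commute)
      also have "\<dots> = (\<Sum>j\<in>{1..k}. (c j)\<^sup>2 * Ps j ^ l)"
      proof (rule sum.cong[OF refl])
        fix j assume j: "j \<in> {1..k}"
        show "(c j)\<^sup>2 * (\<Sum>u\<in>?A \<rightarrow>\<^sub>E V. if u ` ?A \<subseteq> I j then (\<Prod>j\<in>?A. P (u j)) else 0)
            = (c j)\<^sup>2 * Ps j ^ l"
          using tuple_sum_restrict[OF fV _, of ?A "I j" P] Isupp[OF j] suppV by (simp add: Ps_def)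
      qed
      also have "\<dots> = (\<Sum>j\<in>{1..k}. Ps j ^ (2 * L + 2 - l))"
      proof (rule sum.cong[OF refl])
        fix j
        have e: "2 * L + 2 - l = (L + 1 - l) * 2 + l" using lL by simp
        show "(c j)\<^sup>2 * Ps j ^ l = Ps j ^ (2 * L + 2 - l)"
          unfolding c_def e by (simp add: power_add power_mult)
      qed
      finally show ?thesis .
    qed
    have e2: "real (2 * L + 2) - real l = real (2 * L + 2 - l)" using lL by simp
    have ren2: "renyi (real (2 * L + 2) - real l) Ps {1..k}
        = - (1 / (real (2 * L + 1) - real l)) * log 2 (\<Sum>j\<in>{1..k}. Ps j ^ (2 * L + 2 - l))"
      unfolding renyi_def e2 using pw[of "2 * L + 2 - l"] lL by simp
    have nz: "real (2 * L + 1) - real l \<noteq> 0" using lL by simp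
    show ?thesis
      unfolding theta_def using False X ren2 part1[symmetric] Lpos nz
      by (simp add: field_simps)
  qed
  show ?thesis using part1 part2 unfolding Ps_def by blast
qed

end
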